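(* Let $g:[0,1]\to\mathbb{R}$ be continuous with $g(0)=g(1)=0$ and $g(y)>0$ for all $y\in(0,1)$, and let $S$ be the solid obtained by rotating about the $y$-axis the region bounded by the $y$-axis and the curve $x^2=g(y)$, $y\in[0,1]$. Let $$\rho=\frac{\int_0^1 g(1-s^2)\,ds}{\int_0^1 g(s^2)\,ds}$$ be the turn-up number of $S$ with respect to the $y$-axis. Then $\rho=1$ if and only if $$\int_0^{\pi/4}\big[g(\cos^2 t)-g(\sin^2 t)\big]\cos\!\Big(\frac{\pi}{4}+t\Big)\,dt=0.$$
   Context: The turn-up number of a solid with respect to a vertical line is the ratio of the Torricelli drainage times $T=\frac1K\int_0^H A(h)h^{-1/2}\,dh$ (with $A(h)$ the horizontal cross-sectional area at height $h$ and the orifice at the lowest point) for the solid in the two positions obtained by turning it upside down while keeping that line vertical. For the solid $S$ above, with cross-sectional area $\pi g(h)$ at height $h$, these two times are proportional to $\int_0^1 g(s^2)\,ds$ and $\int_0^1 g(1-s^2)\,ds$, giving the displayed formula for $\rho$. *)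

theory Defs
  imports "HOL-Analysis.Analysis"
begin

text \<open>Turn-up number of the solid of revolution S (about the y-axis) bounded by
  the y-axis and x^2 = g(y), 0 <= y <= 1: the ratio of the two Torricelli
  drainage times, which (per the paper) equals the ratio of the integrals below.\<close>
definition turn_up_number :: "(real \<Rightarrow> real) \<Rightarrow> real" where
  "turn_up_number g =
     integral {0..1} (\<lambda>s. g (1 - s\<^sup>2)) / integral {0..1} (\<lambda>s. g (s\<^sup>2))"

end

theory Submission
  imports Defs
begin

lemma chain_int:
  fixes f :: "real \<Rightarrow> real"
  assumes cf: "continuous_on {0..1} f"
    and d: "(\<phi> has_real_derivative \<phi>') (at t)"
    and im: "\<phi> ` S \<subseteq> {0..1}" and tS: "t \<in> S"
  shows "((\<lambda>t. integral {0..\<phi> t} f) has_vector_derivative (\<phi>' * f (\<phi> t))) (at t within S)"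
proof -
  have d1: "(\<phi> has_vector_derivative \<phi>') (at t within S)"
    using d has_real_derivative_iff_has_vector_derivative has_vector_derivative_at_within by blast
  have "\<phi> t \<in> {0..1}" using im tS by blast
  then have d2: "((\<lambda>u. integral {0..u} f) has_vector_derivative f (\<phi> t)) (at (\<phi> t) within \<phi> ` S)"
    using integral_has_vector_derivative[OF cf] has_vector_derivative_within_subset im by blast
  show ?thesis using vector_diff_chain_within[OF d1 d2] by (simp add: o_def)
qed

theorem theorem4:
  fixes g :: "real \<Rightarrow> real"
  assumes cont: "continuous_on {0..1} g"
    and g0: "g 0 = 0" and g1: "g 1 = 0"
    and pos: "\<And>y. 0 < y \<Longrightarrow> y < 1 \<Longrightarrow> g y > 0"
  shows "turn_up_number g = 1 \<longleftrightarrow>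
    integral {0..pi/4} (\<lambda>t. (g ((cos t)\<^sup>2) - g ((sin t)\<^sup>2)) * cos (pi/4 + t)) = 0"
proof -
  define a where "a = (\<lambda>s::real. g (s\<^sup>2))"
  define b where "b = (\<lambda>s::real. g (1 - s\<^sup>2))"
  have ca: "continuous_on {0..1} a" unfolding a_def
    by (rule continuous_on_compose2[OF cont]) (auto intro!: continuous_intros simp: power_le_one)
  have cb: "continuous_on {0..1} b" unfolding b_def
    by (rule continuous_on_compose2[OF cont]) (auto intro!: continuous_intros simp: power_le_one)
  define G where "G = (\<lambda>x. integral {0..x} a)"
  define H where "H = (\<lambda>x. integral {0..x} b)"
  define D where "D = integral {0..1} a"
  define N where "N = integral {0..1} b"
  have Dpos: "D > 0"
  proof -
    have "integral {0..1} (\<lambda>_::real. 0::real) < integral {0..1} a"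
    proof (rule integral_less_real[of 0 1 "\<lambda>_. 0" a])
      show "continuous_on {0..1} (\<lambda>_::real. 0::real)" by simp
      show "continuous_on {0..1} a" by (rule ca)
      show "{0::real<..<1} \<noteq> {}" by auto
      fix x :: real assume "x \<in> {0<..<1}"
      then have "0 < x\<^sup>2" "x\<^sup>2 < 1" by (auto simp: power_less_one_iff)
      then show "0 < a x" using pos a_def by simp
    qed
    then show ?thesis by (simp add: D_def)
  qed
  define \<Phi> where "\<Phi> = (\<lambda>t. H (sin t) + G (cos t) - G (sin t) - H (cos t))"
  define \<Phi>' where "\<Phi>' = (\<lambda>t. cos t * b (sin t) + (- sin t) * a (cos t) - cos t * a (sin t) - (- sin t) * b (cos t))"
  have sinim: "sin ` {0..pi/4} \<subseteq> {0..1}"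
    using sin_ge_zero by (auto simp: sin_le_one) 
  have cosim: "cos ` {0..pi/4} \<subseteq> {0..1}"
    using cos_ge_zero by (auto simp: cos_le_one)
  have I1: "(\<Phi>' has_integral (\<Phi> (pi/4) - \<Phi> 0)) {0..pi/4}"
    unfolding \<Phi>_def \<Phi>'_def G_def H_def
    apply (rule fundamental_theorem_of_calculus)
     apply simp
    apply (intro derivative_intros chain_int[OF cb] chain_int[OF ca] sinim cosim)
    by auto
  have I2: "\<Phi> (pi/4) - \<Phi> 0 = N - D"
    by (simp add: \<Phi>_def G_def H_def N_def D_def sin_45 cos_45)
  have pw: "\<Phi>' t = sqrt 2 * ((g ((cos t)\<^sup>2) - g ((sin t)\<^sup>2)) * cos (pi/4 + t))" for t
  proof -
    have e1: "1 - (sin t)\<^sup>2 = (cos t)\<^sup>2" and e2: "1 - (cos t)\<^sup>2 = (sin t)\<^sup>2"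
      by (simp add: cos_squared_eq) (simp add: sin_squared_eq)
    have h: "sqrt 2 * cos (pi/4 + t) = cos t - sin t"
      by (simp add: cos_add cos_45 sin_45 algebra_simps)
    have "\<Phi>' t = (g ((cos t)\<^sup>2) - g ((sin t)\<^sup>2)) * (cos t - sin t)"
      unfolding \<Phi>'_def a_def b_def by (simp only: e1 e2) (simp add: algebra_simps)
    then show ?thesis unfolding h[symmetric] by (metis mult.left_commute)
  qed
  have ext1: "\<Phi>' = (\<lambda>t. sqrt 2 * ((g ((cos t)\<^sup>2) - g ((sin t)\<^sup>2)) * cos (pi/4 + t)))"
    by (rule ext) (rule pw)
  have I3: "((\<lambda>t. sqrt 2 * ((g ((cos t)\<^sup>2) - g ((sin t)\<^sup>2)) * cos (pi/4 + t))) has_integral (N - D)) {0..pi/4}"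
    using I1 unfolding I2 ext1 .
  have I4: "((\<lambda>t. (g ((cos t)\<^sup>2) - g ((sin t)\<^sup>2)) * cos (pi/4 + t)) has_integral ((N - D) / sqrt 2)) {0..pi/4}"
    using has_integral_cmul[OF I3, of "1 / sqrt 2"] by simp
  have "integral {0..pi/4} (\<lambda>t. (g ((cos t)\<^sup>2) - g ((sin t)\<^sup>2)) * cos (pi/4 + t)) = (N - D) / sqrt 2"
    using I4 by (rule integral_unique)
  moreover have "turn_up_number g = N / D"
    by (simp add: turn_up_number_def N_def D_def a_def b_def)
  ultimately show ?thesis using Dpos by auto
qed

end
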